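(* Let $\alpha\in\ell^2$. The following are equivalent: (i) $R_\alpha$ is a compact operator on $\ell^2$; (ii) $\mathcal{L}:=\lim_{n\to\infty}L([n,\infty))=0$; (iii) for every $\epsilon>0$, the associated $(\epsilon,L)$-sequence has finite length.
   Context: $\mathbb{N}=\{0,1,2,\dots\}$; $(R_\alpha f)(k)=\alpha_k\sum_{j=0}^kf(j)$. For a finite natural interval $I$: $\mu(I)=\sum_{k\in I}|\alpha_k|^2$, $\|f\|_{2,I}=(\sum_{k\in I}|f(k)|^2)^{1/2}$, $l(I,f)=\sum_{k\in I}\sum_{n\in I\setminus\{k\}}|\alpha_k\alpha_n\sum_{j=\min(k,n)+1}^{\max(k,n)}f(j)|^2$, $L(I)=(\sup_{\|f\|_{2,I}\le1}l(I,f)/\mu(I))^{1/2}$ (sup over $f$ supported in $I$; $L(I)=0$ if $\alpha$ vanishes on $I$); $L([a,\infty))=\sup_{b\ge a}L([a,b])$ (so $\mathcal L\in[0,\infty]$ is the limit of a nonincreasing sequence). $(\epsilon,L)$-sequence: $c_0=0$, $c_{k+1}=\inf\{t\in\mathbb{N}:t>c_k,\ L([c_k,t-1])>\epsilon\}$ ($\inf\emptyset=+\infty$); it has finite length $N$ if $c_N<\infty$ and $c_{N+1}=+\infty$. *)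

theory Defs
  imports "HOL-Analysis.Analysis" "HOL-Library.Extended_Nat" "HOL-Library.Extended_Real"
begin

definition in_l2 :: "(nat \<Rightarrow> complex) \<Rightarrow> bool" where
  "in_l2 f \<longleftrightarrow> summable (\<lambda>k. (cmod (f k))^2)"

definition l2_norm :: "(nat \<Rightarrow> complex) \<Rightarrow> real" where
  "l2_norm f = sqrt (\<Sum>k. (cmod (f k))^2)"

text \<open>Compact (linear) operator on l2: maps l2 into l2 and every bounded sequence
  in l2 is mapped to a sequence having an l2-norm convergent subsequence
  (i.e. images of bounded sets are relatively compact).\<close>
definition compact_op_l2 :: "((nat \<Rightarrow> complex) \<Rightarrow> (nat \<Rightarrow> complex)) \<Rightarrow> bool" where
  "compact_op_l2 T \<longleftrightarrow>
     (\<forall>f. in_l2 f \<longrightarrow> in_l2 (T f)) \<and>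
     (\<forall>u :: nat \<Rightarrow> nat \<Rightarrow> complex. (\<forall>n. in_l2 (u n)) \<and> (\<exists>B. \<forall>n. l2_norm (u n) \<le> B) \<longrightarrow>
        (\<exists>r g. strict_mono r \<and> in_l2 g \<and>
               (\<lambda>n. l2_norm (\<lambda>k. T (u (r n)) k - g k)) \<longlonglongrightarrow> 0))"

definition R_op :: "(nat \<Rightarrow> complex) \<Rightarrow> (nat \<Rightarrow> complex) \<Rightarrow> (nat \<Rightarrow> complex)" where
  "R_op \<alpha> f = (\<lambda>k. \<alpha> k * (\<Sum>j\<le>k. f j))"

definition mu :: "(nat \<Rightarrow> complex) \<Rightarrow> nat \<Rightarrow> nat \<Rightarrow> real" where
  "mu \<alpha> a b = (\<Sum>k\<in>{a..b}. (cmod (\<alpha> k))^2)"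

definition norm2I :: "nat \<Rightarrow> nat \<Rightarrow> (nat \<Rightarrow> complex) \<Rightarrow> real" where
  "norm2I a b f = sqrt (\<Sum>k\<in>{a..b}. (cmod (f k))^2)"

definition lI :: "(nat \<Rightarrow> complex) \<Rightarrow> nat \<Rightarrow> nat \<Rightarrow> (nat \<Rightarrow> complex) \<Rightarrow> real" where
  "lI \<alpha> a b f = (\<Sum>k\<in>{a..b}. \<Sum>n\<in>{a..b} - {k}.
      (cmod (\<alpha> k * \<alpha> n * (\<Sum>j\<in>{min k n + 1..max k n}. f j)))^2)"

definition LI :: "(nat \<Rightarrow> complex) \<Rightarrow> nat \<Rightarrow> nat \<Rightarrow> real" where
  "LI \<alpha> a b = (if (\<forall>k\<in>{a..b}. \<alpha> k = 0) then 0 else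
      sqrt (Sup {lI \<alpha> a b f / mu \<alpha> a b | f. (\<forall>k. k \<notin> {a..b} \<longrightarrow> f k = 0) \<and> norm2I a b f \<le> 1}))"

definition Ltail :: "(nat \<Rightarrow> complex) \<Rightarrow> nat \<Rightarrow> ereal" where
  "Ltail \<alpha> a = (SUP b\<in>{a..}. ereal (LI \<alpha> a b))"

text \<open>The (\<epsilon>,L)-sequence, with values in nat \<union> {\<infinity>} (inf of empty set = \<infinity>).\<close>
primrec eps_L_seq :: "(nat \<Rightarrow> complex) \<Rightarrow> real \<Rightarrow> nat \<Rightarrow> enat" where
  "eps_L_seq \<alpha> \<epsilon> 0 = 0"
| "eps_L_seq \<alpha> \<epsilon> (Suc k) =
     (case eps_L_seq \<alpha> \<epsilon> k of
        \<infinity> \<Rightarrow> \<infinity>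
      | enat c \<Rightarrow> (if (\<exists>t. c < t \<and> LI \<alpha> c (t - 1) > \<epsilon>)
                   then enat (LEAST t. c < t \<and> LI \<alpha> c (t - 1) > \<epsilon>) else \<infinity>))"

definition finite_length :: "(nat \<Rightarrow> complex) \<Rightarrow> real \<Rightarrow> bool" where
  "finite_length \<alpha> \<epsilon> \<longleftrightarrow> (\<exists>N. eps_L_seq \<alpha> \<epsilon> N \<noteq> \<infinity> \<and> eps_L_seq \<alpha> \<epsilon> (Suc N) = \<infinity>)"

end

theory Submission
  imports Defs "HOL-Library.Diagonal_Subsequence"
begin


lemma sum_inv_sqrt_le: "(\<Sum>j\<le>n. 1 / sqrt (real j + 1)) \<le> 2 * sqrt (real n + 1)"
proof (induction n)
  case 0 then show ?case by simp
next
  case (Suc n)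
  define a where "a = sqrt (real n + 1)"
  define b where "b = sqrt (real n + 2)"
  have a0: "a > 0" and ab: "a \<le> b" and b0: "b > 0" unfolding a_def b_def by auto
  have bb: "b * b = real n + 2" unfolding b_def by simp
  have aa: "a * a = real n + 1" unfolding a_def by simp
  have "1 / b \<le> 2 * b - 2 * a"
  proof -
    have "(b - a) * (b + a) = 1" using aa bb by (simp add: algebra_simps)
    moreover have "(b - a) * (b + a) \<le> (b - a) * (2 * b)"
      using ab by (intro mult_left_mono) auto
    ultimately have "1 \<le> 2 * (b - a) * b" by (simp add: algebra_simps)
    thus ?thesis using b0 by (simp add: field_simps)
  qed
  moreover have "sqrt (real (Suc n) + 1) = b" unfolding b_def by (simp add: add.commute)
  ultimately show ?case using Suc.IH unfolding a_def by (simp add: add.commute)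
qed

lemma sum_sq_cs_sqrt:
  fixes h :: "nat \<Rightarrow> real"
  shows "(\<Sum>j\<le>n. h j)\<^sup>2 \<le> 2 * sqrt (real n + 1) * (\<Sum>j\<le>n. sqrt (real j + 1) * (h j)\<^sup>2)"
proof -
  define s where "s j = sqrt (sqrt (real j + 1))" for j
  have s0: "s j > 0" for j unfolding s_def by simp
  have sn: "s j \<noteq> 0" for j using s0[of j] by simp
  have ss: "(s j)\<^sup>2 = sqrt (real j + 1)" for j unfolding s_def by simp
  have "(\<Sum>j\<le>n. h j) = (\<Sum>j\<le>n. (1 / s j) * (s j * h j))"
    by (intro sum.cong) (auto simp: field_simps sn)
  hence "(\<Sum>j\<le>n. h j)\<^sup>2 \<le> (\<Sum>j\<le>n. (1 / s j)\<^sup>2) * (\<Sum>j\<le>n. (s j * h j)\<^sup>2)"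
    using Cauchy_Schwarz_ineq_sum by metis
  also have "(\<Sum>j\<le>n. (1 / s j)\<^sup>2) = (\<Sum>j\<le>n. 1 / sqrt (real j + 1))"
    by (simp add: power_divide ss)
  also have "(\<Sum>j\<le>n. (s j * h j)\<^sup>2) = (\<Sum>j\<le>n. sqrt (real j + 1) * (h j)\<^sup>2)"
    by (simp add: power_mult_distrib ss)
  also have "(\<Sum>j\<le>n. 1 / sqrt (real j + 1)) * (\<Sum>j\<le>n. sqrt (real j + 1) * (h j)\<^sup>2)
      \<le> 2 * sqrt (real n + 1) * (\<Sum>j\<le>n. sqrt (real j + 1) * (h j)\<^sup>2)"
    by (intro mult_right_mono sum_inv_sqrt_le sum_nonneg) auto
  finally show ?thesis .
qed

lemma abel_sqrt:
  fixes w :: "nat \<Rightarrow> real"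
  assumes w0: "\<And>n. w n \<ge> 0"
    and hyp: "\<And>n. n \<le> K \<Longrightarrow> real (n+1) * (\<Sum>m\<in>{n..K}. w m) \<le> A"
    and j: "j \<le> K"
  shows "(\<Sum>n\<in>{j..K}. w n * sqrt (real n + 1))
          \<le> (\<Sum>m\<in>{j..K}. w m) * sqrt (real j + 1) + A / sqrt (real j + 1)"
  using j
proof (induction j rule: inc_induct)
  case base
  have "real (K+1) * w K \<le> A" using hyp[of K] by simp
  moreover have "real (K+1) * w K \<ge> 0" using w0[of K] by simp
  ultimately have "A \<ge> 0" by linarith
  then show ?case by simp
next
  case (step j)
  define W where "W = (\<Sum>m\<in>{Suc j..K}. w m)"
  define sj where "sj = sqrt (real j + 1)"
  define sk where "sk = sqrt (real (Suc j) + 1)"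
  have sj0: "sj > 0" and sk0: "sk > 0" and sjk: "sj \<le> sk" unfolding sj_def sk_def by auto
  have skk: "sk * sk = real (Suc j) + 1" unfolding sk_def by simp
  have W0: "W \<ge> 0" unfolding W_def by (simp add: sum_nonneg w0)
  have WA: "W * (sk * sk) \<le> A" using hyp[of "Suc j"] step.hyps skk unfolding W_def
    by (simp add: mult.commute)
  have split1: "(\<Sum>n\<in>{j..K}. w n * sqrt (real n + 1)) = w j * sj + (\<Sum>n\<in>{Suc j..K}. w n * sqrt (real n + 1))"
    using step.hyps by (simp add: sum.atLeast_Suc_atMost sj_def)
  have split2: "(\<Sum>m\<in>{j..K}. w m) = w j + W"
    using step.hyps by (simp add: sum.atLeast_Suc_atMost W_def)
  have key: "W * (sk - sj) \<le> A / sj - A / sk"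
  proof -
    have "(sk - sj) * (sj * sk) \<le> (sk - sj) * (sk * sk)"
      using sjk sk0 by (intro mult_left_mono) auto
    hence "W * ((sk - sj) * (sj * sk)) \<le> W * ((sk - sj) * (sk * sk))"
      by (rule mult_left_mono[OF _ W0])
    hence "W * (sk - sj) * (sj * sk) \<le> W * (sk * sk) * (sk - sj)" by (simp add: algebra_simps)
    also have "\<dots> \<le> A * (sk - sj)" using WA sjk by (simp add: mult_right_mono)
    finally have "W * (sk - sj) * (sj * sk) \<le> A * (sk - sj)" .
    thus ?thesis using sj0 sk0 by (simp add: field_simps)
  qed
  have "(\<Sum>n\<in>{j..K}. w n * sqrt (real n + 1)) \<le> w j * sj + (W * sk + A / sk)"
    using split1 step.IH unfolding W_def sk_def by simp
  also have "\<dots> \<le> (w j + W) * sj + A / sj" using key by (simp add: algebra_simps)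
  finally show ?case using split2 sj_def by simp
qed

lemma sum_triangle_swap:
  fixes F :: "nat \<Rightarrow> nat \<Rightarrow> real"
  shows "(\<Sum>n\<le>K. \<Sum>j\<le>n. F n j) = (\<Sum>j\<le>K. \<Sum>n\<in>{j..K}. F n j)"
proof (induction K)
  case 0 then show ?case by simp
next
  case (Suc K)
  have "(\<Sum>j\<le>Suc K. \<Sum>n\<in>{j..Suc K}. F n j)
      = (\<Sum>j\<le>K. \<Sum>n\<in>{j..Suc K}. F n j) + F (Suc K) (Suc K)" by simp
  also have "(\<Sum>j\<le>K. \<Sum>n\<in>{j..Suc K}. F n j) = (\<Sum>j\<le>K. (\<Sum>n\<in>{j..K}. F n j) + F (Suc K) j)"
    by (intro sum.cong refl) simp
  also have "\<dots> = (\<Sum>j\<le>K. \<Sum>n\<in>{j..K}. F n j) + (\<Sum>j\<le>K. F (Suc K) j)"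
    by (simp add: sum.distrib)
  finally show ?case using Suc.IH by simp
qed

lemma hardy:
  fixes w h :: "nat \<Rightarrow> real"
  assumes w0: "\<And>n. w n \<ge> 0"
    and hyp: "\<And>n. n \<le> K \<Longrightarrow> real (n+1) * (\<Sum>m\<in>{n..K}. w m) \<le> A"
  shows "(\<Sum>n\<le>K. w n * (\<Sum>j\<le>n. h j)\<^sup>2) \<le> 4 * A * (\<Sum>j\<le>K. (h j)\<^sup>2)"
proof -
  define c where "c j = sqrt (real j + 1) * (h j)\<^sup>2" for j
  have c0: "c j \<ge> 0" for j unfolding c_def by simp
  have "(\<Sum>n\<le>K. w n * (\<Sum>j\<le>n. h j)\<^sup>2) \<le> (\<Sum>n\<le>K. w n * (2 * sqrt (real n + 1) * (\<Sum>j\<le>n. c j)))"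
    unfolding c_def by (intro sum_mono mult_left_mono sum_sq_cs_sqrt w0)
  also have "\<dots> = (\<Sum>n\<le>K. \<Sum>j\<le>n. c j * (2 * (w n * sqrt (real n + 1))))"
    by (intro sum.cong refl) (simp add: sum_distrib_left sum_distrib_right algebra_simps)
  also have "\<dots> = (\<Sum>j\<le>K. \<Sum>n\<in>{j..K}. c j * (2 * (w n * sqrt (real n + 1))))"
    by (rule sum_triangle_swap)
  also have "\<dots> = (\<Sum>j\<le>K. c j * (2 * (\<Sum>n\<in>{j..K}. w n * sqrt (real n + 1))))"
    by (simp add: sum_distrib_left)
  also have "\<dots> \<le> (\<Sum>j\<le>K. c j * (2 * (2 * A / sqrt (real j + 1))))"
  proof (rule sum_mono)
    fix j assume "j \<in> {..K}"
    hence jK: "j \<le> K" by simp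
    define s where "s = sqrt (real j + 1)"
    have s0: "s > 0" unfolding s_def by simp
    have ss: "s * s = real j + 1" unfolding s_def by simp
    have W: "(\<Sum>m\<in>{j..K}. w m) * (s * s) \<le> A" using hyp[OF jK] ss by (simp add: mult.commute add.commute)
    have "(\<Sum>m\<in>{j..K}. w m) * s \<le> A / s" using W s0 by (simp add: field_simps)
    hence "2 * (\<Sum>n\<in>{j..K}. w n * sqrt (real n + 1)) \<le> 2 * (2 * A / sqrt (real j + 1))"
      using abel_sqrt[OF w0 hyp jK] unfolding s_def by simp
    thus "c j * (2 * (\<Sum>n\<in>{j..K}. w n * sqrt (real n + 1))) \<le> c j * (2 * (2 * A / sqrt (real j + 1)))"
      by (rule mult_left_mono[OF _ c0])
  qed
  also have "\<dots> = (\<Sum>j\<le>K. 4 * A * (h j)\<^sup>2)"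
    by (intro sum.cong refl) (simp add: c_def field_simps)
  also have "\<dots> = 4 * A * (\<Sum>j\<le>K. (h j)\<^sup>2)" by (simp add: sum_distrib_left)
  finally show ?thesis .
qed

lemma hardy_c:
  fixes w :: "nat \<Rightarrow> real" and f :: "nat \<Rightarrow> complex"
  assumes w0: "\<And>n. w n \<ge> 0"
    and hyp: "\<And>n. n \<le> K \<Longrightarrow> real (n+1) * (\<Sum>m\<in>{n..K}. w m) \<le> A"
  shows "(\<Sum>n\<le>K. w n * (cmod (\<Sum>j\<le>n. f j))\<^sup>2) \<le> 4 * A * (\<Sum>j\<le>K. (cmod (f j))\<^sup>2)"
proof -
  have "(\<Sum>n\<le>K. w n * (cmod (\<Sum>j\<le>n. f j))\<^sup>2) \<le> (\<Sum>n\<le>K. w n * (\<Sum>j\<le>n. cmod (f j))\<^sup>2)"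
    by (intro sum_mono mult_left_mono w0 power_mono norm_sum) auto
  also have "\<dots> \<le> 4 * A * (\<Sum>j\<le>K. (cmod (f j))\<^sup>2)"
    by (rule hardy[OF w0 hyp])
  finally show ?thesis .
qed



lemma norm2I_le1: "norm2I a b f \<le> 1 \<Longrightarrow> (\<Sum>k\<in>{a..b}. (cmod (f k))\<^sup>2) \<le> 1"
  unfolding norm2I_def by simp

lemma LI_le:
  assumes e: "\<epsilon> \<ge> 0"
    and H: "\<And>f. (\<forall>k. k \<notin> {a..b} \<longrightarrow> f k = 0) \<Longrightarrow> norm2I a b f \<le> 1 \<Longrightarrow> lI \<alpha> a b f \<le> \<epsilon>\<^sup>2 * mu \<alpha> a b"
  shows "LI \<alpha> a b \<le> \<epsilon>"
proof (cases "\<forall>k\<in>{a..b}. \<alpha> k = 0")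
  case True then show ?thesis by (simp add: LI_def e)
next
  case False
  then obtain k where k: "k \<in> {a..b}" "\<alpha> k \<noteq> 0" by blast
  have "(cmod (\<alpha> k))\<^sup>2 \<le> mu \<alpha> a b" unfolding mu_def
    by (rule member_le_sum[OF k(1)]) auto
  moreover have "(cmod (\<alpha> k))\<^sup>2 > 0" using k(2) by simp
  ultimately have mu0: "mu \<alpha> a b > 0" by linarith
  let ?S = "{lI \<alpha> a b f / mu \<alpha> a b | f. (\<forall>k. k \<notin> {a..b} \<longrightarrow> f k = 0) \<and> norm2I a b f \<le> 1}"
  have "lI \<alpha> a b (\<lambda>_. 0) / mu \<alpha> a b \<in> ?S" by (auto simp: norm2I_def)
  hence ne: "?S \<noteq> {}" by blast
  have "Sup ?S \<le> \<epsilon>\<^sup>2"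
  proof (rule cSup_least[OF ne])
    fix x assume "x \<in> ?S"
    then obtain f where f: "x = lI \<alpha> a b f / mu \<alpha> a b" "\<forall>k. k \<notin> {a..b} \<longrightarrow> f k = 0" "norm2I a b f \<le> 1"
      by blast
    show "x \<le> \<epsilon>\<^sup>2" using H[OF f(2,3)] mu0 f(1) by (simp add: pos_divide_le_eq)
  qed
  hence "sqrt (Sup ?S) \<le> sqrt (\<epsilon>\<^sup>2)" by (rule real_sqrt_le_mono)
  thus ?thesis using False e by (simp add: LI_def)
qed

lemma lI_upper:
  fixes \<alpha> f :: "nat \<Rightarrow> complex"
  assumes hyp: "\<And>n K. a \<le> n \<Longrightarrow> n \<le> K \<Longrightarrow> real (n+1) * (\<Sum>m\<in>{n..K}. (cmod (\<alpha> m))\<^sup>2) \<le> A"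
    and nf: "norm2I a b f \<le> 1"
  shows "lI \<alpha> a b f \<le> 8 * A * mu \<alpha> a b"
proof -
  define I where "I = {a..b}"
  have finI: "finite I" unfolding I_def by simp
  define G where "G k n = (cmod (\<alpha> k * \<alpha> n * (\<Sum>j\<in>{min k n + 1..max k n}. f j)))\<^sup>2" for k n
  have Gsym: "G k n = G n k" for k n unfolding G_def by (simp add: min.commute max.commute mult.commute)
  have A0: "A \<ge> 0"
  proof -
    have "real (a+1) * (\<Sum>m\<in>{a..a}. (cmod (\<alpha> m))\<^sup>2) \<le> A" using hyp[of a a] by simp
    moreover have "real (a+1) * (\<Sum>m\<in>{a..a}. (cmod (\<alpha> m))\<^sup>2) \<ge> 0" by simp
    ultimately show ?thesis by linarith
  qed
  have fsum: "(\<Sum>j\<in>{a..b}. (cmod (f j))\<^sup>2) \<le> 1" using norm2I_le1[OF nf] .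
  have lI_eq: "lI \<alpha> a b f = (\<Sum>k\<in>I. \<Sum>n\<in>I-{k}. G k n)"
    unfolding lI_def G_def I_def ..
  have split: "(\<Sum>n\<in>I-{k}. G k n) = (\<Sum>n\<in>{n. n\<in>I \<and> k<n}. G k n) + (\<Sum>n\<in>{n. n\<in>I \<and> n<k}. G k n)" for k
  proof -
    have "I - {k} = {n. n\<in>I \<and> k<n} \<union> {n. n\<in>I \<and> n<k}" by auto
    moreover have "{n. n\<in>I \<and> k<n} \<inter> {n. n\<in>I \<and> n<k} = {}" by auto
    ultimately show ?thesis using finI by (simp add: sum.union_disjoint)
  qed
  have swap: "(\<Sum>k\<in>I. \<Sum>n\<in>{n. n\<in>I \<and> n<k}. G k n) = (\<Sum>n\<in>I. \<Sum>k\<in>{k. k\<in>I \<and> n<k}. G k n)"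
    by (rule sum.swap_restrict[OF finI finI])
  also have "\<dots> = (\<Sum>n\<in>I. \<Sum>k\<in>{k. k\<in>I \<and> n<k}. G n k)" by (simp add: Gsym)
  finally have swap': "(\<Sum>k\<in>I. \<Sum>n\<in>{n. n\<in>I \<and> n<k}. G k n) = (\<Sum>k\<in>I. \<Sum>n\<in>{n. n\<in>I \<and> k<n}. G k n)" .
  have lI2: "lI \<alpha> a b f = 2 * (\<Sum>k\<in>I. \<Sum>n\<in>{n. n\<in>I \<and> k<n}. G k n)"
    unfolding lI_eq split sum.distrib swap' by simp
  have inner: "(\<Sum>n\<in>{n. n\<in>I \<and> k<n}. G k n) \<le> (cmod (\<alpha> k))\<^sup>2 * (4 * A)" if kI: "k \<in> I" for k
  proof -
    have set_eq: "{n. n\<in>I \<and> k<n} = {k+1..b}" using kI unfolding I_def by auto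
    have Geq: "G k n = (cmod (\<alpha> k))\<^sup>2 * ((cmod (\<alpha> n))\<^sup>2 * (cmod (\<Sum>j\<in>{k+1..n}. f j))\<^sup>2)" if "k < n" for n
      using that unfolding G_def by (simp add: norm_mult power_mult_distrib min_def max_def)
    have "(\<Sum>n\<in>{n. n\<in>I \<and> k<n}. G k n) = (cmod (\<alpha> k))\<^sup>2 * (\<Sum>n\<in>{k+1..b}. (cmod (\<alpha> n))\<^sup>2 * (cmod (\<Sum>j\<in>{k+1..n}. f j))\<^sup>2)"
      unfolding set_eq sum_distrib_left by (intro sum.cong refl Geq) auto
    also have "\<dots> \<le> (cmod (\<alpha> k))\<^sup>2 * (4 * A)"
    proof (rule mult_left_mono)
      show "(\<Sum>n\<in>{k+1..b}. (cmod (\<alpha> n))\<^sup>2 * (cmod (\<Sum>j\<in>{k+1..n}. f j))\<^sup>2) \<le> 4 * A"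
      proof (cases "k < b")
        case False
        then show ?thesis using A0 by simp
      next
        case True
        define K where "K = b - (k+1)"
        have bK: "b = K + (k+1)" unfolding K_def using True by simp
        have "(\<Sum>n\<in>{k+1..b}. (cmod (\<alpha> n))\<^sup>2 * (cmod (\<Sum>j\<in>{k+1..n}. f j))\<^sup>2)
            = (\<Sum>m\<in>{0..K}. (cmod (\<alpha> (m + (k+1))))\<^sup>2 * (cmod (\<Sum>j\<in>{k+1..m+(k+1)}. f j))\<^sup>2)"
          unfolding bK using sum.shift_bounds_cl_nat_ivl[of "\<lambda>n. (cmod (\<alpha> n))\<^sup>2 * (cmod (\<Sum>j\<in>{k+1..n}. f j))\<^sup>2" 0 "k+1" K]
          by simp
        also have "\<dots> = (\<Sum>m\<le>K. (cmod (\<alpha> (m + (k+1))))\<^sup>2 * (cmod (\<Sum>i\<le>m. f (i + (k+1))))\<^sup>2)"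
        proof -
          have "(\<Sum>j\<in>{k+1..m+(k+1)}. f j) = (\<Sum>i\<le>m. f (i + (k+1)))" for m
            using sum.shift_bounds_cl_nat_ivl[of f 0 "k+1" m] by (simp add: atLeast0AtMost)
          thus ?thesis by (simp add: atLeast0AtMost)
        qed
        also have "\<dots> \<le> 4 * A * (\<Sum>i\<le>K. (cmod (f (i + (k+1))))\<^sup>2)"
        proof (rule hardy_c)
          fix m assume mK: "m \<le> K"
          have eq: "(\<Sum>i\<in>{m..K}. (cmod (\<alpha> (i + (k+1))))\<^sup>2) = (\<Sum>n\<in>{m+(k+1)..b}. (cmod (\<alpha> n))\<^sup>2)"
            unfolding bK using sum.shift_bounds_cl_nat_ivl[of "\<lambda>n. (cmod (\<alpha> n))\<^sup>2" m "k+1" K] by simp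
          have h2: "real (m + (k+1) + 1) * (\<Sum>n\<in>{m+(k+1)..b}. (cmod (\<alpha> n))\<^sup>2) \<le> A"
            using hyp[of "m + (k+1)" b] kI mK unfolding I_def bK by simp
          have h3: "real (m+1) * (\<Sum>n\<in>{m+(k+1)..b}. (cmod (\<alpha> n))\<^sup>2)
              \<le> real (m + (k+1) + 1) * (\<Sum>n\<in>{m+(k+1)..b}. (cmod (\<alpha> n))\<^sup>2)"
            by (intro mult_right_mono sum_nonneg) auto
          show "real (m+1) * (\<Sum>i\<in>{m..K}. (cmod (\<alpha> (i + (k+1))))\<^sup>2) \<le> A"
            unfolding eq by (rule order_trans[OF h3 h2])
        qed simp
        also have "(\<Sum>i\<le>K. (cmod (f (i + (k+1))))\<^sup>2) = (\<Sum>j\<in>{k+1..b}. (cmod (f j))\<^sup>2)"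
          unfolding bK using sum.shift_bounds_cl_nat_ivl[of "\<lambda>j. (cmod (f j))\<^sup>2" 0 "k+1" K]
          by (simp add: atLeast0AtMost)
        also have "\<dots> \<le> (\<Sum>j\<in>{a..b}. (cmod (f j))\<^sup>2)"
          using kI unfolding I_def by (intro sum_mono2) auto
        finally have "(\<Sum>n\<in>{k+1..b}. (cmod (\<alpha> n))\<^sup>2 * (cmod (\<Sum>j\<in>{k+1..n}. f j))\<^sup>2)
            \<le> 4 * A * (\<Sum>j\<in>{a..b}. (cmod (f j))\<^sup>2)" by (simp add: A0 mult_left_mono)
        also have "\<dots> \<le> 4 * A" using fsum A0 by (simp add: mult_left_le)
        finally show ?thesis .
      qed
    qed simp
    finally show ?thesis .
  qed
  have "lI \<alpha> a b f \<le> 2 * (\<Sum>k\<in>I. (cmod (\<alpha> k))\<^sup>2 * (4 * A))"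
    unfolding lI2 by (intro mult_left_mono sum_mono inner) auto
  also have "\<dots> = 8 * A * mu \<alpha> a b" unfolding mu_def I_def sum_distrib_right[symmetric] by simp
  finally show ?thesis .
qed

lemma lI_bdd:
  assumes supp: "\<forall>k. k \<notin> {a..b} \<longrightarrow> g k = 0" and ng: "norm2I a b g \<le> 1"
  shows "lI \<alpha> a b g \<le> (\<Sum>k\<in>{a..b}. \<Sum>n\<in>{a..b}-{k}. (cmod (\<alpha> k) * cmod (\<alpha> n) * real (b+1))\<^sup>2)"
proof -
  have g1: "cmod (g j) \<le> 1" for j
  proof (cases "j \<in> {a..b}")
    case True
    have "(cmod (g j))\<^sup>2 \<le> (\<Sum>k\<in>{a..b}. (cmod (g k))\<^sup>2)" by (rule member_le_sum[OF True]) auto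
    also have "\<dots> \<le> 1" by (rule norm2I_le1[OF ng])
    finally show ?thesis by (simp add: power_le_one_iff abs_le_square_iff)
  next
    case False then show ?thesis using supp by simp
  qed
  have "cmod (\<Sum>j\<in>{min k n + 1..max k n}. g j) \<le> real (b+1)" if "k \<in> {a..b}" "n \<in> {a..b}" for k n
  proof -
    have "cmod (\<Sum>j\<in>{min k n + 1..max k n}. g j) \<le> (\<Sum>j\<in>{min k n + 1..max k n}. cmod (g j))" by (rule norm_sum)
    also have "\<dots> \<le> real (card {min k n + 1..max k n}) * 1" by (rule sum_bounded_above) (simp add: g1)
    also have "\<dots> \<le> real (b+1)" using that by auto
    finally show ?thesis .
  qed
  hence "(cmod (\<alpha> k * \<alpha> n * (\<Sum>j\<in>{min k n + 1..max k n}. g j)))\<^sup>2 \<le> (cmod (\<alpha> k) * cmod (\<alpha> n) * real (b+1))\<^sup>2"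
    if "k \<in> {a..b}" "n \<in> {a..b}" for k n
    using that by (auto simp: norm_mult intro!: power_mono mult_left_mono)
  thus ?thesis unfolding lI_def by (intro sum_mono) auto
qed

lemma LI_sq_ge_aux:
  assumes nz: "\<not> (\<forall>k\<in>{a..b}. \<alpha> k = 0)"
    and supp: "\<forall>k. k \<notin> {a..b} \<longrightarrow> g k = 0" and ng: "norm2I a b g \<le> 1"
  shows "lI \<alpha> a b g \<le> (LI \<alpha> a b)\<^sup>2 * mu \<alpha> a b \<and> LI \<alpha> a b \<ge> 0"
proof -
  from nz obtain k where k: "k \<in> {a..b}" "\<alpha> k \<noteq> 0" by blast
  have "(cmod (\<alpha> k))\<^sup>2 \<le> mu \<alpha> a b" unfolding mu_def
    by (rule member_le_sum[OF k(1)]) auto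
  moreover have "(cmod (\<alpha> k))\<^sup>2 > 0" using k(2) by simp
  ultimately have mu0: "mu \<alpha> a b > 0" by linarith
  let ?S = "{lI \<alpha> a b f / mu \<alpha> a b | f. (\<forall>k. k \<notin> {a..b} \<longrightarrow> f k = 0) \<and> norm2I a b f \<le> 1}"
  define B where "B = (\<Sum>k\<in>{a..b}. \<Sum>n\<in>{a..b}-{k}. (cmod (\<alpha> k) * cmod (\<alpha> n) * real (b+1))\<^sup>2)"
  have bdd: "bdd_above ?S"
  proof (rule bdd_aboveI)
    fix x assume "x \<in> ?S"
    then obtain f where f: "x = lI \<alpha> a b f / mu \<alpha> a b" "\<forall>k. k \<notin> {a..b} \<longrightarrow> f k = 0" "norm2I a b f \<le> 1"
      by blast
    show "x \<le> B / mu \<alpha> a b" unfolding f(1) B_def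
      using lI_bdd[OF f(2,3)] mu0 by (simp add: divide_right_mono)
  qed
  have mem: "lI \<alpha> a b g / mu \<alpha> a b \<in> ?S" using supp ng by blast
  have le: "lI \<alpha> a b g / mu \<alpha> a b \<le> Sup ?S" by (rule cSup_upper[OF mem bdd])
  have lI0: "lI \<alpha> a b g \<ge> 0" unfolding lI_def by (intro sum_nonneg) auto
  have S0: "Sup ?S \<ge> 0" using le lI0 mu0 by (meson divide_nonneg_pos order_trans)
  have "LI \<alpha> a b = sqrt (Sup ?S)" unfolding LI_def using nz by (rule if_not_P)
  hence "(LI \<alpha> a b)\<^sup>2 = Sup ?S" and "LI \<alpha> a b \<ge> 0" using S0 by simp_all
  thus ?thesis using le mu0 by (simp add: pos_divide_le_eq)
qed

lemma LI_sq_ge: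
  assumes nz: "\<not> (\<forall>k\<in>{a..b}. \<alpha> k = 0)"
    and supp: "\<forall>k. k \<notin> {a..b} \<longrightarrow> g k = 0" and ng: "norm2I a b g \<le> 1"
  shows "lI \<alpha> a b g \<le> (LI \<alpha> a b)\<^sup>2 * mu \<alpha> a b"
  using LI_sq_ge_aux[OF assms] by simp

lemma LI_nonneg: "LI \<alpha> a b \<ge> 0"
proof (cases "\<forall>k\<in>{a..b}. \<alpha> k = 0")
  case True then show ?thesis by (simp add: LI_def)
next
  case False
  show ?thesis using LI_sq_ge_aux[OF False, of "\<lambda>_. 0"] by (simp add: norm2I_def)
qed

lemma LI_test:
  assumes p: "1 \<le> p" "a \<le> p" "2*p \<le> b"
  shows "real p * mu \<alpha> a p * (\<Sum>n\<in>{2*p..b}. (cmod (\<alpha> n))\<^sup>2) \<le> (LI \<alpha> a b)\<^sup>2 * mu \<alpha> a b"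
proof (cases "\<forall>k\<in>{a..b}. \<alpha> k = 0")
  case True
  have "mu \<alpha> a p = 0" unfolding mu_def using True p by (intro sum.neutral) auto
  moreover have "mu \<alpha> a b \<ge> 0" unfolding mu_def by (intro sum_nonneg) auto
  ultimately show ?thesis by simp
next
  case False
  define c where "c = complex_of_real (1 / sqrt (real p))"
  define g where "g j = (if j \<in> {Suc p..2*p} then c else 0)" for j
  have pp: "real p > 0" using p by simp
  have cn: "cmod c = 1 / sqrt (real p)" unfolding c_def norm_of_real by simp
  have cc: "(cmod c)\<^sup>2 = 1 / real p" unfolding cn using pp by (simp add: power_divide)
  have supp: "\<forall>k. k \<notin> {a..b} \<longrightarrow> g k = 0" unfolding g_def using p by auto
  have "(\<Sum>j\<in>{a..b}. (cmod (g j))\<^sup>2) = (\<Sum>j\<in>{a..b}. if j \<in> {Suc p..2*p} then (cmod c)\<^sup>2 else 0)"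
    unfolding g_def by (intro sum.cong refl) auto
  also have "\<dots> = (\<Sum>j\<in>{a..b} \<inter> {Suc p..2*p}. (cmod c)\<^sup>2)" by (rule sum.inter_restrict[symmetric]) simp
  also have "{a..b} \<inter> {Suc p..2*p} = {Suc p..2*p}" using p by auto
  also have "(\<Sum>j\<in>{Suc p..2*p}. (cmod c)\<^sup>2) = 1" using pp by (simp add: cc)
  finally have ng: "norm2I a b g \<le> 1" unfolding norm2I_def by simp
  have gs: "(\<Sum>j\<in>{min k n + 1..max k n}. g j) = of_nat p * c" if "k \<le> p" "2*p \<le> n" for k n
  proof -
    have "(\<Sum>j\<in>{min k n + 1..max k n}. g j) = (\<Sum>j\<in>{k+1..n}. g j)" using that by (simp add: min_def max_def)
    also have "\<dots> = (\<Sum>j\<in>{k+1..n} \<inter> {Suc p..2*p}. c)" unfolding g_def by (rule sum.inter_restrict[symmetric]) simp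
    also have "{k+1..n} \<inter> {Suc p..2*p} = {Suc p..2*p}" using that by auto
    finally show ?thesis by simp
  qed
  define G where "G k n = (cmod (\<alpha> k * \<alpha> n * (\<Sum>j\<in>{min k n + 1..max k n}. g j)))\<^sup>2" for k n
  have G0: "G k n \<ge> 0" for k n unfolding G_def by simp
  have Geq: "G k n = (cmod (\<alpha> k))\<^sup>2 * (cmod (\<alpha> n))\<^sup>2 * real p" if "k \<le> p" "2*p \<le> n" for k n
  proof -
    have "(cmod (of_nat p * c))\<^sup>2 = (real p)\<^sup>2 * (cmod c)\<^sup>2"
      by (simp add: norm_mult power_mult_distrib)
    also have "\<dots> = real p" unfolding cc using pp by (simp add: power2_eq_square)
    finally have "(cmod (of_nat p * c))\<^sup>2 = real p" .
    thus ?thesis unfolding G_def gs[OF that] by (simp add: norm_mult power_mult_distrib)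
  qed
  have "real p * mu \<alpha> a p * (\<Sum>n\<in>{2*p..b}. (cmod (\<alpha> n))\<^sup>2)
      = (\<Sum>k\<in>{a..p}. \<Sum>n\<in>{2*p..b}. (cmod (\<alpha> k))\<^sup>2 * (cmod (\<alpha> n))\<^sup>2 * real p)"
  proof -
    have "real p * mu \<alpha> a p * (\<Sum>n\<in>{2*p..b}. (cmod (\<alpha> n))\<^sup>2)
        = (\<Sum>k\<in>{a..p}. (cmod (\<alpha> k))\<^sup>2 * (real p * (\<Sum>n\<in>{2*p..b}. (cmod (\<alpha> n))\<^sup>2)))"
    proof -
      have "real p * mu \<alpha> a p * (\<Sum>n\<in>{2*p..b}. (cmod (\<alpha> n))\<^sup>2)
         = (\<Sum>k\<in>{a..p}. (cmod (\<alpha> k))\<^sup>2) * (real p * (\<Sum>n\<in>{2*p..b}. (cmod (\<alpha> n))\<^sup>2))"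
        unfolding mu_def by (simp only: mult_ac)
      thus ?thesis by (simp only: sum_distrib_right)
    qed
    also have "\<dots> = (\<Sum>k\<in>{a..p}. \<Sum>n\<in>{2*p..b}. (cmod (\<alpha> k))\<^sup>2 * (cmod (\<alpha> n))\<^sup>2 * real p)"
      by (rule sum.cong[OF refl]) (simp add: sum_distrib_left sum_distrib_right mult_ac)
    finally show ?thesis .
  qed
  also have "\<dots> = (\<Sum>k\<in>{a..p}. \<Sum>n\<in>{2*p..b}. G k n)"
    by (rule sum.cong[OF refl], rule sum.cong[OF refl]) (auto simp: Geq)
  also have "\<dots> \<le> (\<Sum>k\<in>{a..p}. \<Sum>n\<in>{a..b}-{k}. G k n)"
    using p by (intro sum_mono sum_mono2) (auto simp: G0)
  also have "\<dots> \<le> (\<Sum>k\<in>{a..b}. \<Sum>n\<in>{a..b}-{k}. G k n)"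
    using p by (intro sum_mono2) (auto simp: G0 sum_nonneg)
  also have "\<dots> = lI \<alpha> a b g" unfolding lI_def G_def ..
  also have "\<dots> \<le> (LI \<alpha> a b)\<^sup>2 * mu \<alpha> a b" by (rule LI_sq_ge[OF False supp ng])
  finally show ?thesis .
qed


lemma LI_diag: "LI \<alpha> a a = 0"
proof -
  have "LI \<alpha> a a \<le> 0" by (rule LI_le) (auto simp: lI_def)
  thus ?thesis using LI_nonneg[of \<alpha> a a] by simp
qed

definition hcond :: "(nat \<Rightarrow> complex) \<Rightarrow> bool" where
  "hcond \<alpha> \<longleftrightarrow> (\<forall>\<epsilon>>0. \<exists>N. \<forall>n\<ge>N. \<forall>K\<ge>n. real (n+1) * (\<Sum>m\<in>{n..K}. (cmod (\<alpha> m))\<^sup>2) \<le> \<epsilon>)"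

lemma hcond_LI:
  assumes h: "hcond \<alpha>" and e: "\<epsilon> > 0"
  shows "\<exists>N. \<forall>a\<ge>N. \<forall>b. LI \<alpha> a b \<le> \<epsilon>"
proof -
  define \<delta> where "\<delta> = \<epsilon>\<^sup>2 / 8"
  have d: "\<delta> > 0" unfolding \<delta>_def using e by simp
  obtain N where N: "\<And>n K. n \<ge> N \<Longrightarrow> K \<ge> n \<Longrightarrow> real (n+1) * (\<Sum>m\<in>{n..K}. (cmod (\<alpha> m))\<^sup>2) \<le> \<delta>"
    using h d unfolding hcond_def by blast
  have "LI \<alpha> a b \<le> \<epsilon>" if a: "a \<ge> N" for a b
  proof (rule LI_le)
    show "\<epsilon> \<ge> 0" using e by simp
    fix f :: "nat \<Rightarrow> complex" assume "norm2I a b f \<le> 1"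
    hence "lI \<alpha> a b f \<le> 8 * \<delta> * mu \<alpha> a b"
      by (intro lI_upper) (use N a in auto)
    thus "lI \<alpha> a b f \<le> \<epsilon>\<^sup>2 * mu \<alpha> a b" unfolding \<delta>_def by simp
  qed
  thus ?thesis by blast
qed

lemma tail_small:
  assumes l2: "in_l2 \<alpha>" and e: "\<epsilon> \<ge> 0" and a: "\<And>b. b \<ge> a \<Longrightarrow> LI \<alpha> a b \<le> \<epsilon>"
  shows "\<exists>P\<ge>1. \<forall>p\<ge>P. \<forall>b\<ge>2*p. real p * (\<Sum>n\<in>{2*p..b}. (cmod (\<alpha> n))\<^sup>2) \<le> 2 * \<epsilon>\<^sup>2"
proof (cases "\<forall>k\<ge>a. \<alpha> k = 0")
  case True
  show ?thesis
  proof (intro exI[of _ "max 1 a"] conjI allI impI)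
    fix p b assume "max 1 a \<le> p" "2*p \<le> b"
    hence "(\<Sum>n\<in>{2*p..b}. (cmod (\<alpha> n))\<^sup>2) = 0" using True by (intro sum.neutral) auto
    thus "real p * (\<Sum>n\<in>{2*p..b}. (cmod (\<alpha> n))\<^sup>2) \<le> 2 * \<epsilon>\<^sup>2" by simp
  qed simp
next
  case False
  then obtain q where q: "q \<ge> a" "\<alpha> q \<noteq> 0" by blast
  define \<eta> where "\<eta> = (cmod (\<alpha> q))\<^sup>2"
  have eta: "\<eta> > 0" unfolding \<eta>_def using q by simp
  have "summable (\<lambda>k. (cmod (\<alpha> k))\<^sup>2)" using l2 unfolding in_l2_def .
  then obtain M where M: "\<And>m n. m \<ge> M \<Longrightarrow> norm (\<Sum>k\<in>{m..<n}. (cmod (\<alpha> k))\<^sup>2) < \<eta>"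
    unfolding summable_Cauchy using eta by blast
  show ?thesis
  proof (intro exI[of _ "max (max 1 a) (max q M)"] conjI allI impI)
    fix p b assume p: "max (max 1 a) (max q M) \<le> p" and b: "2*p \<le> b"
    have mup: "mu \<alpha> a p \<ge> \<eta>" unfolding mu_def \<eta>_def
      by (rule member_le_sum) (use q p in auto)
    have split: "mu \<alpha> a b = mu \<alpha> a p + (\<Sum>k\<in>{Suc p..<Suc b}. (cmod (\<alpha> k))\<^sup>2)"
    proof -
      have "{a..b} = {a..p} \<union> {Suc p..<Suc b}" using p b by auto
      moreover have "{a..p} \<inter> {Suc p..<Suc b} = {}" by auto
      ultimately show ?thesis unfolding mu_def by (simp add: sum.union_disjoint)
    qed
    have "(\<Sum>k\<in>{Suc p..<Suc b}. (cmod (\<alpha> k))\<^sup>2) < \<eta>" using M[of "Suc p" "Suc b"] p by simp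
    hence mub: "mu \<alpha> a b \<le> 2 * mu \<alpha> a p" using split mup by simp
    have "real p * mu \<alpha> a p * (\<Sum>n\<in>{2*p..b}. (cmod (\<alpha> n))\<^sup>2) \<le> (LI \<alpha> a b)\<^sup>2 * mu \<alpha> a b"
      by (rule LI_test) (use p b in auto)
    also have "\<dots> \<le> \<epsilon>\<^sup>2 * (2 * mu \<alpha> a p)"
    proof (rule mult_mono)
      show "(LI \<alpha> a b)\<^sup>2 \<le> \<epsilon>\<^sup>2" using a[of b] p b LI_nonneg[of \<alpha> a b] by (intro power_mono) auto
    qed (use mub in \<open>auto simp: mu_def intro!: sum_nonneg\<close>)
    finally have "(real p * (\<Sum>n\<in>{2*p..b}. (cmod (\<alpha> n))\<^sup>2)) * mu \<alpha> a p \<le> (2 * \<epsilon>\<^sup>2) * mu \<alpha> a p"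
      by (simp add: mult_ac)
    thus "real p * (\<Sum>n\<in>{2*p..b}. (cmod (\<alpha> n))\<^sup>2) \<le> 2 * \<epsilon>\<^sup>2"
      using mup eta by (meson less_le_trans mult_le_cancel_right_pos)
  qed simp
qed

lemma LI_hcond:
  assumes l2: "in_l2 \<alpha>" and H: "\<And>\<epsilon>. \<epsilon> > 0 \<Longrightarrow> \<exists>a. \<forall>b\<ge>a. LI \<alpha> a b \<le> \<epsilon>"
  shows "hcond \<alpha>"
  unfolding hcond_def
proof (intro allI impI)
  fix \<delta> :: real assume d: "\<delta> > 0"
  define \<epsilon> where "\<epsilon> = sqrt (\<delta> / 8)"
  have e: "\<epsilon> > 0" unfolding \<epsilon>_def using d by simp
  have ee: "\<epsilon>\<^sup>2 = \<delta> / 8" unfolding \<epsilon>_def using d by simp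
  obtain a where a: "\<And>b. b \<ge> a \<Longrightarrow> LI \<alpha> a b \<le> \<epsilon>" using H[OF e] by blast
  obtain P where P1: "P \<ge> 1" and P: "\<And>p b. p \<ge> P \<Longrightarrow> b \<ge> 2*p \<Longrightarrow> real p * (\<Sum>n\<in>{2*p..b}. (cmod (\<alpha> n))\<^sup>2) \<le> 2 * \<epsilon>\<^sup>2"
    using tail_small[OF l2 _ a] e by force
  show "\<exists>N. \<forall>n\<ge>N. \<forall>K\<ge>n. real (n+1) * (\<Sum>m\<in>{n..K}. (cmod (\<alpha> m))\<^sup>2) \<le> \<delta>"
  proof (intro exI[of _ "2*P"] allI impI)
    fix n K assume n: "2*P \<le> n" and K: "n \<le> K"
    define p where "p = n div 2"
    have n2: "n \<ge> 2" using n P1 by linarith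
    have p1: "p \<ge> P" "2*p \<le> n" "n + 1 \<le> 4 * p" unfolding p_def using n n2 by presburger+
    have S0: "(\<Sum>m\<in>{n..K}. (cmod (\<alpha> m))\<^sup>2) \<ge> 0" by (intro sum_nonneg) auto
    have "(\<Sum>m\<in>{n..K}. (cmod (\<alpha> m))\<^sup>2) \<le> (\<Sum>m\<in>{2*p..K}. (cmod (\<alpha> m))\<^sup>2)"
      using p1 by (intro sum_mono2) auto
    hence "real p * (\<Sum>m\<in>{n..K}. (cmod (\<alpha> m))\<^sup>2) \<le> real p * (\<Sum>m\<in>{2*p..K}. (cmod (\<alpha> m))\<^sup>2)"
      by (rule mult_left_mono) simp
    also have "\<dots> \<le> 2 * \<epsilon>\<^sup>2" using P[of p K] p1 K by simp
    finally have "real p * (\<Sum>m\<in>{n..K}. (cmod (\<alpha> m))\<^sup>2) \<le> 2 * \<epsilon>\<^sup>2" .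
    hence "4 * (real p * (\<Sum>m\<in>{n..K}. (cmod (\<alpha> m))\<^sup>2)) \<le> \<delta>" using ee by simp
    moreover have "real (n+1) * (\<Sum>m\<in>{n..K}. (cmod (\<alpha> m))\<^sup>2) \<le> real (4*p) * (\<Sum>m\<in>{n..K}. (cmod (\<alpha> m))\<^sup>2)"
      using p1 S0 by (intro mult_right_mono) auto
    ultimately show "real (n+1) * (\<Sum>m\<in>{n..K}. (cmod (\<alpha> m))\<^sup>2) \<le> \<delta>" by simp
  qed
qed


lemma Ltail_nonneg: "Ltail \<alpha> a \<ge> 0"
proof -
  have "ereal (LI \<alpha> a a) \<le> Ltail \<alpha> a" unfolding Ltail_def by (rule SUP_upper) simp
  thus ?thesis by (simp add: LI_diag zero_ereal_def)
qed

lemma small_Ltail: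
  assumes H: "\<And>\<epsilon>. \<epsilon> > 0 \<Longrightarrow> \<exists>N. \<forall>a\<ge>N. \<forall>b. LI \<alpha> a b \<le> \<epsilon>"
  shows "Ltail \<alpha> \<longlonglongrightarrow> 0"
proof (rule order_tendstoI)
  fix y :: ereal assume "y < 0"
  hence "y < Ltail \<alpha> n" for n using Ltail_nonneg[of \<alpha> n] by (rule less_le_trans)
  thus "\<forall>\<^sub>F n in sequentially. y < Ltail \<alpha> n" by (intro always_eventually) simp
next
  fix y :: ereal assume "0 < y"
  then obtain z where z: "0 < ereal z" "ereal z < y" using ereal_dense2 by blast
  hence z0: "z / 2 > 0" by simp
  obtain N where N: "\<And>a b. a \<ge> N \<Longrightarrow> LI \<alpha> a b \<le> z / 2" using H[OF z0] by blast
  have "Ltail \<alpha> a < y" if "a \<ge> N" for a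
  proof -
    have "Ltail \<alpha> a \<le> ereal (z/2)" unfolding Ltail_def using N that by (intro SUP_least) auto
    also have "\<dots> < ereal z" using z0 by simp
    finally show ?thesis using z(2) by simp
  qed
  thus "\<forall>\<^sub>F n in sequentially. Ltail \<alpha> n < y" unfolding eventually_sequentially by blast
qed

lemma Ltail_small:
  assumes L: "Ltail \<alpha> \<longlonglongrightarrow> 0" and e: "\<epsilon> > 0"
  shows "\<exists>a. \<forall>b\<ge>a. LI \<alpha> a b \<le> \<epsilon>"
proof -
  have "\<forall>\<^sub>F n in sequentially. Ltail \<alpha> n < ereal \<epsilon>" using order_tendstoD(2)[OF L] e by simp
  then obtain N where N: "\<And>n. n \<ge> N \<Longrightarrow> Ltail \<alpha> n < ereal \<epsilon>" unfolding eventually_sequentially by blast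
  have "LI \<alpha> N b \<le> \<epsilon>" if "b \<ge> N" for b
  proof -
    have "ereal (LI \<alpha> N b) \<le> Ltail \<alpha> N" unfolding Ltail_def using that by (intro SUP_upper) auto
    also have "\<dots> < ereal \<epsilon>" using N by simp
    finally show ?thesis by simp
  qed
  thus ?thesis by blast
qed

lemma eps_step:
  assumes "eps_L_seq \<alpha> \<epsilon> N = enat c" and "eps_L_seq \<alpha> \<epsilon> (Suc N) \<noteq> \<infinity>"
  shows "\<exists>c'. eps_L_seq \<alpha> \<epsilon> (Suc N) = enat c' \<and> c < c' \<and> LI \<alpha> c (c' - 1) > \<epsilon>"
proof -
  have ex: "\<exists>t. c < t \<and> LI \<alpha> c (t - 1) > \<epsilon>"
    using assms by (auto split: if_splits)
  define c' where "c' = (LEAST t. c < t \<and> LI \<alpha> c (t - 1) > \<epsilon>)"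
  have "eps_L_seq \<alpha> \<epsilon> (Suc N) = enat c'" using assms ex unfolding c'_def by simp
  moreover have "c < c' \<and> LI \<alpha> c (c' - 1) > \<epsilon>" unfolding c'_def using ex by (rule LeastI_ex)
  ultimately show ?thesis by blast
qed

lemma small_finite_length:
  assumes H: "\<exists>N. \<forall>a\<ge>N. \<forall>b. LI \<alpha> a b \<le> \<epsilon>"
  shows "finite_length \<alpha> \<epsilon>"
proof (rule ccontr)
  assume nf: "\<not> finite_length \<alpha> \<epsilon>"
  hence step: "eps_L_seq \<alpha> \<epsilon> N \<noteq> \<infinity> \<Longrightarrow> eps_L_seq \<alpha> \<epsilon> (Suc N) \<noteq> \<infinity>" for N
    unfolding finite_length_def by metis
  have fin: "eps_L_seq \<alpha> \<epsilon> N \<noteq> \<infinity>" for N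
  proof (induction N)
    case 0 show ?case by simp
  next
    case (Suc N) show ?case by (rule step[OF Suc.IH])
  qed
  define c where "c N = the_enat (eps_L_seq \<alpha> \<epsilon> N)" for N
  have ceq: "eps_L_seq \<alpha> \<epsilon> N = enat (c N)" for N using fin[of N] unfolding c_def by auto
  have cstep: "c N < c (Suc N) \<and> LI \<alpha> (c N) (c (Suc N) - 1) > \<epsilon>" for N
    using eps_step[OF ceq[of N] fin[of "Suc N"]] ceq[of "Suc N"] by auto
  have cge: "c N \<ge> N" for N
  proof (induction N)
    case 0 then show ?case by simp
  next
    case (Suc N) then show ?case using cstep[of N] by simp
  qed
  obtain N where N: "\<And>a b. a \<ge> N \<Longrightarrow> LI \<alpha> a b \<le> \<epsilon>" using H by blast
  show False using N[OF cge[of N], of "c (Suc N) - 1"] cstep[of N] by simp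
qed

lemma finite_length_small:
  assumes "finite_length \<alpha> \<epsilon>"
  shows "\<exists>a. \<forall>b\<ge>a. LI \<alpha> a b \<le> \<epsilon>"
proof -
  obtain N where N: "eps_L_seq \<alpha> \<epsilon> N \<noteq> \<infinity>" "eps_L_seq \<alpha> \<epsilon> (Suc N) = \<infinity>"
    using assms unfolding finite_length_def by blast
  then obtain c where c: "eps_L_seq \<alpha> \<epsilon> N = enat c" by auto
  have "\<not> (\<exists>t. c < t \<and> LI \<alpha> c (t - 1) > \<epsilon>)"
    using N(2) c by (auto split: if_splits)
  hence "LI \<alpha> c b \<le> \<epsilon>" if "b \<ge> c" for b using that
    by (metis add_diff_cancel_right' le_imp_less_Suc not_le Suc_eq_plus1)
  thus ?thesis by blast
qed



lemma sq_diff_le: "(cmod (x - y))\<^sup>2 \<le> 2 * (cmod x)\<^sup>2 + 2 * (cmod y)\<^sup>2"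
proof -
  have "cmod (x - y) \<le> cmod x + cmod y" by (rule norm_triangle_ineq4)
  hence "(cmod (x - y))\<^sup>2 \<le> (cmod x + cmod y)\<^sup>2" by (intro power_mono) auto
  also have "\<dots> \<le> 2 * (cmod x)\<^sup>2 + 2 * (cmod y)\<^sup>2"
  proof -
    have "(cmod x + cmod y)\<^sup>2 + (cmod x - cmod y)\<^sup>2 = 2 * (cmod x)\<^sup>2 + 2 * (cmod y)\<^sup>2"
      by (simp add: power2_eq_square algebra_simps)
    moreover have "(cmod x - cmod y)\<^sup>2 \<ge> 0" by simp
    ultimately show ?thesis by linarith
  qed
  finally show ?thesis .
qed

lemma in_l2_diff:
  assumes "in_l2 a" "in_l2 b"
  shows "in_l2 (\<lambda>k. a k - b k)"
  unfolding in_l2_def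
proof (rule summable_comparison_test[where g = "\<lambda>k. 2 * (cmod (a k))\<^sup>2 + 2 * (cmod (b k))\<^sup>2"])
  show "\<exists>N. \<forall>n\<ge>N. norm ((cmod (a n - b n))\<^sup>2) \<le> 2 * (cmod (a n))\<^sup>2 + 2 * (cmod (b n))\<^sup>2"
    using sq_diff_le by auto
  show "summable (\<lambda>k. 2 * (cmod (a k))\<^sup>2 + 2 * (cmod (b k))\<^sup>2)"
    using assms unfolding in_l2_def by (intro summable_add summable_mult)
qed

lemma l2_sq: "in_l2 f \<Longrightarrow> (l2_norm f)\<^sup>2 = (\<Sum>k. (cmod (f k))\<^sup>2)"
  unfolding l2_norm_def in_l2_def by (simp add: suminf_nonneg)

lemma l2_partial: "in_l2 f \<Longrightarrow> finite S \<Longrightarrow> (\<Sum>k\<in>S. (cmod (f k))\<^sup>2) \<le> (l2_norm f)\<^sup>2"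
  by (simp add: l2_sq) (rule sum_le_suminf, auto simp: in_l2_def)

lemma l2_nonneg: "in_l2 f \<Longrightarrow> l2_norm f \<ge> 0" unfolding l2_norm_def in_l2_def
  by (auto simp: suminf_nonneg)

lemma in_l2_bounded:
  assumes "\<And>K. (\<Sum>k\<le>K. (cmod (f k))\<^sup>2) \<le> C"
  shows "in_l2 f" "l2_norm f \<le> sqrt C"
proof -
  have b: "(\<Sum>k<n. (cmod (f k))\<^sup>2) \<le> C" for n
  proof -
    have "(\<Sum>k<n. (cmod (f k))\<^sup>2) \<le> (\<Sum>k\<le>n. (cmod (f k))\<^sup>2)" by (intro sum_mono2) auto
    also have "\<dots> \<le> C" by (rule assms)
    finally show ?thesis .
  qed
  show s: "in_l2 f" unfolding in_l2_def by (rule summableI_nonneg_bounded[OF _ b]) auto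
  have "(\<Sum>k. (cmod (f k))\<^sup>2) \<le> C" by (rule suminf_le_const[OF _ b]) (use s in \<open>simp add: in_l2_def\<close>)
  thus "l2_norm f \<le> sqrt C" unfolding l2_norm_def by simp
qed

lemma tail_hardy:
  assumes N: "\<And>n K. n \<ge> N \<Longrightarrow> K \<ge> n \<Longrightarrow> real (n+1) * (\<Sum>m\<in>{n..K}. (cmod (\<alpha> m))\<^sup>2) \<le> \<delta>"
  shows "(\<Sum>k\<in>{N..K}. (cmod (\<alpha> k))\<^sup>2 * (cmod (\<Sum>j\<le>k. h j))\<^sup>2) \<le> 4 * \<delta> * (\<Sum>j\<le>K. (cmod (h j))\<^sup>2)"
proof -
  define w where "w m = (if N \<le> m then (cmod (\<alpha> m))\<^sup>2 else 0)" for m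
  have wsum: "(\<Sum>m\<in>{n..K}. w m) = (\<Sum>m\<in>{max n N..K}. (cmod (\<alpha> m))\<^sup>2)" for n
  proof -
    have "(\<Sum>m\<in>{n..K}. w m) = (\<Sum>m\<in>{n..K} \<inter> {N..}. (cmod (\<alpha> m))\<^sup>2)"
      unfolding w_def by (subst sum.inter_restrict) (auto intro!: sum.cong)
    also have "{n..K} \<inter> {N..} = {max n N..K}" by auto
    finally show ?thesis .
  qed
  have "(\<Sum>n\<le>K. w n * (cmod (\<Sum>j\<le>n. h j))\<^sup>2) \<le> 4 * \<delta> * (\<Sum>j\<le>K. (cmod (h j))\<^sup>2)"
  proof (rule hardy_c)
    show "w n \<ge> 0" for n unfolding w_def by simp
    fix n assume nK: "n \<le> K"
    show "real (n+1) * (\<Sum>m\<in>{n..K}. w m) \<le> \<delta>"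
    proof (cases "N \<le> K")
      case False
      hence "(\<Sum>m\<in>{n..K}. w m) = 0" unfolding wsum by simp
      moreover have "\<delta> \<ge> 0"
      proof -
        have "real (N+1) * (\<Sum>m\<in>{N..N}. (cmod (\<alpha> m))\<^sup>2) \<le> \<delta>" by (rule N) auto
        moreover have "real (N+1) * (\<Sum>m\<in>{N..N}. (cmod (\<alpha> m))\<^sup>2) \<ge> 0" by simp
        ultimately show ?thesis by linarith
      qed
      ultimately show ?thesis by simp
    next
      case True
      have "real (n+1) * (\<Sum>m\<in>{n..K}. w m) \<le> real (max n N + 1) * (\<Sum>m\<in>{max n N..K}. (cmod (\<alpha> m))\<^sup>2)"
        unfolding wsum by (intro mult_right_mono sum_nonneg) auto
      also have "\<dots> \<le> \<delta>" using True nK by (intro N) auto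
      finally show ?thesis .
    qed
  qed
  also have "(\<Sum>n\<le>K. w n * (cmod (\<Sum>j\<le>n. h j))\<^sup>2) = (\<Sum>k\<in>{N..K}. (cmod (\<alpha> k))\<^sup>2 * (cmod (\<Sum>j\<le>k. h j))\<^sup>2)"
  proof -
    have "(\<Sum>n\<le>K. w n * (cmod (\<Sum>j\<le>n. h j))\<^sup>2) = (\<Sum>n\<in>{..K} \<inter> {N..}. (cmod (\<alpha> n))\<^sup>2 * (cmod (\<Sum>j\<le>n. h j))\<^sup>2)"
      unfolding w_def by (subst sum.inter_restrict) (auto intro!: sum.cong)
    also have "{..K} \<inter> {N..} = {N..K}" by auto
    finally show ?thesis by (simp add: ac_simps)
  qed
  finally show ?thesis .
qed


lemma hcond_global:
  assumes l2: "in_l2 \<alpha>" and h: "hcond \<alpha>"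
  shows "\<exists>A. \<forall>n K. n \<le> K \<longrightarrow> real (n+1) * (\<Sum>m\<in>{n..K}. (cmod (\<alpha> m))\<^sup>2) \<le> A"
proof -
  obtain N where N: "\<And>n K. n \<ge> N \<Longrightarrow> K \<ge> n \<Longrightarrow> real (n+1) * (\<Sum>m\<in>{n..K}. (cmod (\<alpha> m))\<^sup>2) \<le> 1"
    using h unfolding hcond_def by (meson zero_less_one)
  define S where "S = (\<Sum>k. (cmod (\<alpha> k))\<^sup>2)"
  have S0: "S \<ge> 0" unfolding S_def using l2 by (simp add: in_l2_def suminf_nonneg)
  have "real (n+1) * (\<Sum>m\<in>{n..K}. (cmod (\<alpha> m))\<^sup>2) \<le> real (N+1) * S + 1" if "n \<le> K" for n K
  proof (cases "n \<ge> N")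
    case True
    have "real (N+1) * S \<ge> 0" using S0 by simp
    thus ?thesis using N[OF True that] by linarith
  next
    case False
    have ps: "(\<Sum>m\<in>{n..K}. (cmod (\<alpha> m))\<^sup>2) \<le> S" unfolding S_def
      by (rule sum_le_suminf) (use l2 in \<open>auto simp: in_l2_def\<close>)
    have "real (n+1) * (\<Sum>m\<in>{n..K}. (cmod (\<alpha> m))\<^sup>2) \<le> real (N+1) * S"
      using False ps S0 by (intro mult_mono) (auto intro: sum_nonneg)
    thus ?thesis by linarith
  qed
  thus ?thesis by blast
qed

lemma R_l2:
  assumes l2: "in_l2 \<alpha>" and h: "hcond \<alpha>" and f: "in_l2 f"
  shows "in_l2 (R_op \<alpha> f)"
proof -
  obtain A where A: "\<And>n K. n \<le> K \<Longrightarrow> real (n+1) * (\<Sum>m\<in>{n..K}. (cmod (\<alpha> m))\<^sup>2) \<le> A"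
    using hcond_global[OF l2 h] by blast
  have "(\<Sum>k\<le>K. (cmod (R_op \<alpha> f k))\<^sup>2) \<le> 4 * A * (l2_norm f)\<^sup>2" for K
  proof -
    have "(\<Sum>k\<le>K. (cmod (R_op \<alpha> f k))\<^sup>2) = (\<Sum>k\<in>{0..K}. (cmod (\<alpha> k))\<^sup>2 * (cmod (\<Sum>j\<le>k. f j))\<^sup>2)"
      unfolding R_op_def by (simp add: norm_mult power_mult_distrib atLeast0AtMost)
    also have "\<dots> \<le> 4 * A * (\<Sum>j\<le>K. (cmod (f j))\<^sup>2)" by (rule tail_hardy) (use A in auto)
    also have "\<dots> \<le> 4 * A * (l2_norm f)\<^sup>2"
    proof (rule mult_left_mono)
      show "(\<Sum>j\<le>K. (cmod (f j))\<^sup>2) \<le> (l2_norm f)\<^sup>2" by (rule l2_partial[OF f]) simp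
      have "real (0+1) * (\<Sum>m\<in>{0..0}. (cmod (\<alpha> m))\<^sup>2) \<le> A" by (rule A) simp
      moreover have "real (0+1) * (\<Sum>m\<in>{0..0::nat}. (cmod (\<alpha> m))\<^sup>2) \<ge> 0" by simp
      ultimately show "0 \<le> 4 * A" by linarith
    qed
    finally show ?thesis .
  qed
  thus ?thesis by (rule in_l2_bounded)
qed


lemma hcond_compact:
  assumes l2: "in_l2 \<alpha>" and h: "hcond \<alpha>"
  shows "compact_op_l2 (R_op \<alpha>)"
  unfolding compact_op_l2_def
proof (intro conjI allI impI)
  fix f :: "nat \<Rightarrow> complex" assume "in_l2 f"
  thus "in_l2 (R_op \<alpha> f)" by (rule R_l2[OF l2 h])
next
  fix u :: "nat \<Rightarrow> nat \<Rightarrow> complex"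
  assume "(\<forall>n. in_l2 (u n)) \<and> (\<exists>B. \<forall>n. l2_norm (u n) \<le> B)"
  then obtain B where ul2: "\<And>n. in_l2 (u n)" and uB: "\<And>n. l2_norm (u n) \<le> B" by blast
  have B0: "B \<ge> 0" using l2_nonneg[OF ul2[of 0]] uB[of 0] by linarith
  have uB2: "(\<Sum>j\<in>S. (cmod (u n j))\<^sup>2) \<le> B\<^sup>2" if "finite S" for n S
  proof -
    have "(\<Sum>j\<in>S. (cmod (u n j))\<^sup>2) \<le> (l2_norm (u n))\<^sup>2" by (rule l2_partial[OF ul2 that])
    also have "\<dots> \<le> B\<^sup>2" using l2_nonneg[OF ul2[of n]] uB[of n] by (intro power_mono) auto
    finally show ?thesis .
  qed
  have coord: "cmod (u n j) \<le> B" for n j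
  proof -
    have "(cmod (u n j))\<^sup>2 \<le> B\<^sup>2" using uB2[of "{j}" n] by simp
    thus ?thesis using B0 by (rule power2_le_imp_le)
  qed
  interpret subseqs "\<lambda>j s. convergent (\<lambda>i. u (s i) j)"
  proof
    fix j :: nat and s :: "nat \<Rightarrow> nat" assume "strict_mono s"
    have "bounded (range (\<lambda>i. u (s i) j))" by (rule boundedI[of _ B]) (auto simp: coord)
    then obtain l r' where r': "strict_mono r'" "((\<lambda>i. u (s i) j) \<circ> r') \<longlonglongrightarrow> l"
      using bounded_imp_convergent_subsequence by blast
    have "convergent (\<lambda>i. u ((s \<circ> r') i) j)" using r'(2) unfolding convergent_def o_def by blast
    thus "\<exists>r'. strict_mono r' \<and> convergent (\<lambda>i. u ((s \<circ> r') i) j)" using r'(1) by blast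
  qed
  define r where "r = diagseq"
  have rmono: "strict_mono r" unfolding r_def by (rule subseq_diagseq)
  have conv: "convergent (\<lambda>i. u (r i) j)" for j
  proof -
    have "convergent (\<lambda>i. u ((diagseq \<circ> (+) (Suc j)) i) j)"
    proof (rule diagseq_holds)
      fix r s :: "nat \<Rightarrow> nat" and n
      assume "strict_mono r" "convergent (\<lambda>i. u (s i) n)"
      hence "convergent ((\<lambda>i. u (s i) n) \<circ> r)" by (intro convergent_subseq_convergent)
      thus "convergent (\<lambda>i. u ((s \<circ> r) i) n)" by (simp add: o_def)
    qed
    then obtain l where "(\<lambda>i. u (diagseq (i + Suc j)) j) \<longlonglongrightarrow> l"
      unfolding convergent_def o_def by (auto simp: add.commute)
    hence "(\<lambda>i. u (diagseq i) j) \<longlonglongrightarrow> l" by (rule LIMSEQ_offset)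
    thus ?thesis unfolding r_def convergent_def by blast
  qed
  define v where "v j = lim (\<lambda>i. u (r i) j)" for j
  have vlim: "(\<lambda>i. u (r i) j) \<longlonglongrightarrow> v j" for j unfolding v_def using conv convergent_LIMSEQ_iff by blast
  have vB: "(\<Sum>j\<le>K. (cmod (v j))\<^sup>2) \<le> B\<^sup>2" for K
  proof (rule LIMSEQ_le_const2)
    show "(\<lambda>i. \<Sum>j\<le>K. (cmod (u (r i) j))\<^sup>2) \<longlonglongrightarrow> (\<Sum>j\<le>K. (cmod (v j))\<^sup>2)"
      by (intro tendsto_intros vlim)
    show "\<exists>N. \<forall>n\<ge>N. (\<Sum>j\<le>K. (cmod (u (r n) j))\<^sup>2) \<le> B\<^sup>2" using uB2 by auto
  qed
  have vl2: "in_l2 v" using vB by (rule in_l2_bounded)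
  define g where "g = R_op \<alpha> v"
  have gl2: "in_l2 g" unfolding g_def by (rule R_l2[OF l2 h vl2])
  define D where "D n j = u (r n) j - v j" for n j
  have Dlim: "(\<lambda>n. D n j) \<longlonglongrightarrow> 0" for j
  proof -
    have "(\<lambda>n. u (r n) j - v j) \<longlonglongrightarrow> v j - v j" by (intro tendsto_intros vlim)
    thus ?thesis unfolding D_def by simp
  qed
  have Req: "(\<lambda>k. R_op \<alpha> (u (r n)) k - g k) = (\<lambda>k. \<alpha> k * (\<Sum>j\<le>k. D n j))" for n
    unfolding R_op_def g_def D_def by (simp add: sum_subtractf right_diff_distrib)
  have DB: "(\<Sum>j\<le>K. (cmod (D n j))\<^sup>2) \<le> 4 * B\<^sup>2" for n K
  proof -
    have "(\<Sum>j\<le>K. (cmod (D n j))\<^sup>2) \<le> (\<Sum>j\<le>K. 2 * (cmod (u (r n) j))\<^sup>2 + 2 * (cmod (v j))\<^sup>2)"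
      unfolding D_def by (intro sum_mono sq_diff_le)
    also have "\<dots> = 2 * (\<Sum>j\<le>K. (cmod (u (r n) j))\<^sup>2) + 2 * (\<Sum>j\<le>K. (cmod (v j))\<^sup>2)"
      by (simp add: sum.distrib sum_distrib_left)
    also have "\<dots> \<le> 2 * B\<^sup>2 + 2 * B\<^sup>2" using uB2[of "{..K}" "r n"] vB[of K] by simp
    finally show ?thesis by simp
  qed
  show "\<exists>r g. strict_mono r \<and> in_l2 g \<and> (\<lambda>n. l2_norm (\<lambda>k. R_op \<alpha> (u (r n)) k - g k)) \<longlonglongrightarrow> 0"
  proof (intro exI[of _ r] exI[of _ g] conjI rmono gl2)
    show "(\<lambda>n. l2_norm (\<lambda>k. R_op \<alpha> (u (r n)) k - g k)) \<longlonglongrightarrow> 0"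
      unfolding Req
    proof (rule LIMSEQ_I)
      fix \<epsilon> :: real assume e: "\<epsilon> > 0"
      define \<delta> where "\<delta> = \<epsilon>\<^sup>2 / (64 * (B\<^sup>2 + 1))"
      have "64 * (B\<^sup>2 + 1) > 0" by (simp add: add_nonneg_pos)
      hence d: "\<delta> > 0" unfolding \<delta>_def using e by (intro divide_pos_pos) auto
      have dB: "16 * \<delta> * B\<^sup>2 \<le> \<epsilon>\<^sup>2 / 4"
      proof -
        have "64 * (B\<^sup>2 + 1) > 0" by (simp add: add_nonneg_pos)
        hence Bp: "64 * (B\<^sup>2 + 1) \<noteq> 0" by simp
        have eq: "\<delta> * (64 * (B\<^sup>2 + 1)) = \<epsilon>\<^sup>2" unfolding \<delta>_def using Bp by simp
        have "16 * \<delta> * B\<^sup>2 \<le> 16 * \<delta> * (B\<^sup>2 + 1)" using d by simp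
        also have "\<dots> = \<epsilon>\<^sup>2 / 4" using eq by (simp add: algebra_simps)
        finally show ?thesis .
      qed
      obtain N where N: "\<And>n K. n \<ge> N \<Longrightarrow> K \<ge> n \<Longrightarrow> real (n+1) * (\<Sum>m\<in>{n..K}. (cmod (\<alpha> m))\<^sup>2) \<le> \<delta>"
        using h d unfolding hcond_def by blast
      define hd where "hd n = (\<Sum>k<N. (cmod (\<alpha> k))\<^sup>2 * (cmod (\<Sum>j\<le>k. D n j))\<^sup>2)" for n
      have "hd \<longlonglongrightarrow> (\<Sum>k<N. (cmod (\<alpha> k))\<^sup>2 * (cmod (\<Sum>j\<le>k. (0::complex)))\<^sup>2)"
        unfolding hd_def by (intro tendsto_intros Dlim)
      hence hdlim: "hd \<longlonglongrightarrow> 0" by simp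
      have e4: "\<epsilon>\<^sup>2 / 4 > 0" using e by simp
      obtain M where M: "\<And>n. n \<ge> M \<Longrightarrow> norm (hd n - 0) < \<epsilon>\<^sup>2 / 4"
        using LIMSEQ_D[OF hdlim e4] by blast
      have "norm (l2_norm (\<lambda>k. \<alpha> k * (\<Sum>j\<le>k. D n j)) - 0) < \<epsilon>" if n: "n \<ge> M" for n
      proof -
        have bound: "(\<Sum>k\<le>K. (cmod (\<alpha> k * (\<Sum>j\<le>k. D n j)))\<^sup>2) \<le> \<epsilon>\<^sup>2 / 2" for K
        proof -
          let ?t = "\<lambda>k. (cmod (\<alpha> k))\<^sup>2 * (cmod (\<Sum>j\<le>k. D n j))\<^sup>2"
          have "(\<Sum>k\<le>K. (cmod (\<alpha> k * (\<Sum>j\<le>k. D n j)))\<^sup>2) = (\<Sum>k\<le>K. ?t k)"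
            by (simp add: norm_mult power_mult_distrib)
          also have "\<dots> \<le> (\<Sum>k\<in>{..<N} \<union> {N..K}. ?t k)" by (intro sum_mono2) auto
          also have "\<dots> = hd n + (\<Sum>k\<in>{N..K}. ?t k)" unfolding hd_def
            by (subst sum.union_disjoint) auto
          also have "(\<Sum>k\<in>{N..K}. ?t k) \<le> 4 * \<delta> * (\<Sum>j\<le>K. (cmod (D n j))\<^sup>2)"
            by (rule tail_hardy[OF N])
          also have "\<dots> \<le> 4 * \<delta> * (4 * B\<^sup>2)" using d DB by (intro mult_left_mono) auto
          finally show ?thesis using M[OF n] dB by simp
        qed
        have "in_l2 (\<lambda>k. \<alpha> k * (\<Sum>j\<le>k. D n j))" "l2_norm (\<lambda>k. \<alpha> k * (\<Sum>j\<le>k. D n j)) \<le> sqrt (\<epsilon>\<^sup>2 / 2)"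
          using bound by (rule in_l2_bounded)+
        moreover have "sqrt (\<epsilon>\<^sup>2 / 2) < \<epsilon>"
        proof -
          have "\<epsilon>\<^sup>2 / 2 < \<epsilon>\<^sup>2" using e by simp
          hence "sqrt (\<epsilon>\<^sup>2 / 2) < sqrt (\<epsilon>\<^sup>2)" by (rule real_sqrt_less_mono)
          thus ?thesis using e by simp
        qed
        ultimately show ?thesis using l2_nonneg by (simp add: abs_of_nonneg)
      qed
      thus "\<exists>no. \<forall>n\<ge>no. norm (l2_norm (\<lambda>k. \<alpha> k * (\<Sum>j\<le>k. D n j)) - 0) < \<epsilon>" by blast
    qed
  qed
qed


lemma compact_hcond:
  assumes c: "compact_op_l2 (R_op \<alpha>)"
  shows "hcond \<alpha>"
proof (rule ccontr)
  assume "\<not> hcond \<alpha>"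
  then obtain \<delta> :: real where d: "\<delta> > 0"
    and bad: "\<forall>N. \<exists>n K. n \<ge> N \<and> K \<ge> n \<and> real (n+1) * (\<Sum>m\<in>{n..K}. (cmod (\<alpha> m))\<^sup>2) > \<delta>"
    unfolding hcond_def by (auto simp: not_le)
  then obtain nn KK where nK: "\<And>N. nn N \<ge> N" "\<And>N. KK N \<ge> nn N"
    and big: "\<And>N. real (nn N + 1) * (\<Sum>m\<in>{nn N..KK N}. (cmod (\<alpha> m))\<^sup>2) > \<delta>"
    by metis
  have Rl2: "\<And>f. in_l2 f \<Longrightarrow> in_l2 (R_op \<alpha> f)" using c unfolding compact_op_l2_def by blast
  define cc where "cc i = complex_of_real (1 / sqrt (real (nn i) + 1))" for i
  define u where "u i j = (if j \<le> nn i then cc i else 0)" for i j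
  have ccn: "(cmod (cc i))\<^sup>2 = 1 / (real (nn i) + 1)" for i
  proof -
    have "cmod (cc i) = 1 / sqrt (real (nn i) + 1)" unfolding cc_def norm_of_real by simp
    thus ?thesis by (simp add: power_divide)
  qed
  have usum: "(\<Sum>j\<le>K. (cmod (u i j))\<^sup>2) \<le> 1" for i K
  proof -
    have "(\<Sum>j\<le>K. (cmod (u i j))\<^sup>2) = (\<Sum>j\<in>{..K} \<inter> {..nn i}. (cmod (cc i))\<^sup>2)"
      unfolding u_def by (subst sum.inter_restrict) (auto intro!: sum.cong)
    also have "\<dots> \<le> (\<Sum>j\<in>{..nn i}. (cmod (cc i))\<^sup>2)" by (intro sum_mono2) auto
    also have "\<dots> = 1" by (simp add: ccn)
    finally show ?thesis .
  qed
  have ul2: "in_l2 (u i)" and uB: "l2_norm (u i) \<le> 1" for i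
    using in_l2_bounded[of "u i" 1, OF usum] by simp_all
  obtain r g where r: "strict_mono r" and gl2: "in_l2 g"
    and lim: "(\<lambda>n. l2_norm (\<lambda>k. R_op \<alpha> (u (r n)) k - g k)) \<longlonglongrightarrow> 0"
    using c ul2 uB unfolding compact_op_l2_def by blast
  have Ru: "(cmod (R_op \<alpha> (u i) k))\<^sup>2 = (cmod (\<alpha> k))\<^sup>2 * real (nn i + 1)" if "k \<ge> nn i" for i k
  proof -
    have "(\<Sum>j\<le>k. u i j) = (\<Sum>j\<in>{..k} \<inter> {..nn i}. cc i)"
      unfolding u_def by (subst sum.inter_restrict) (auto intro!: sum.cong)
    also have "{..k} \<inter> {..nn i} = {..nn i}" using that by auto
    finally have "(\<Sum>j\<le>k. u i j) = of_nat (nn i + 1) * cc i" by simp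
    moreover have "cmod (of_nat (nn i + 1) :: complex) = real (nn i + 1)" by (rule norm_of_nat)
    ultimately have "(cmod (R_op \<alpha> (u i) k))\<^sup>2 = (cmod (\<alpha> k))\<^sup>2 * ((real (nn i + 1))\<^sup>2 * (cmod (cc i))\<^sup>2)"
      unfolding R_op_def by (simp only: norm_mult power_mult_distrib)
    also have "(real (nn i + 1))\<^sup>2 * (cmod (cc i))\<^sup>2 = real (nn i + 1)"
    proof -
      have "real (nn i) + 1 \<noteq> 0" by linarith
      thus ?thesis unfolding ccn by (simp add: power2_eq_square add.commute)
    qed
    finally show ?thesis .
  qed
  have gs: "summable (\<lambda>k. (cmod (g k))\<^sup>2)" using gl2 unfolding in_l2_def .
  have d8: "\<delta> / 8 > 0" using d by simp
  obtain M where M: "\<And>m n. m \<ge> M \<Longrightarrow> norm (\<Sum>k\<in>{m..<n}. (cmod (g k))\<^sup>2) < \<delta> / 8"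
    using gs d8 unfolding summable_Cauchy by blast
  have "sqrt (\<delta> / 8) > 0" using d by simp
  then obtain M2 where M2: "\<And>n. n \<ge> M2 \<Longrightarrow> norm (l2_norm (\<lambda>k. R_op \<alpha> (u (r n)) k - g k) - 0) < sqrt (\<delta> / 8)"
    using LIMSEQ_D[OF lim] by blast
  define i where "i = max M M2"
  define n where "n = nn (r i)"
  define K where "K = KK (r i)"
  define Dv where "Dv = (\<lambda>k. R_op \<alpha> (u (r i)) k - g k)"
  have Dl2: "in_l2 Dv" unfolding Dv_def by (intro in_l2_diff Rl2 ul2 gl2)
  have iM: "M \<le> i" "M2 \<le> i" unfolding i_def by simp_all
  have "i \<le> r i" by (rule seq_suble[OF r])
  hence nM: "n \<ge> M" unfolding n_def using nK(1)[of "r i"] iM by linarith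
  have Dsmall: "(l2_norm Dv)\<^sup>2 < \<delta> / 8"
  proof -
    have "l2_norm Dv < sqrt (\<delta> / 8)" using M2[OF iM(2)] l2_nonneg[OF Dl2] unfolding Dv_def by simp
    hence "(l2_norm Dv)\<^sup>2 < (sqrt (\<delta> / 8))\<^sup>2" using l2_nonneg[OF Dl2] by (intro power_strict_mono) auto
    thus ?thesis using d by simp
  qed
  have "\<delta> < real (n + 1) * (\<Sum>m\<in>{n..K}. (cmod (\<alpha> m))\<^sup>2)" using big[of "r i"] unfolding n_def K_def by simp
  also have "\<dots> = (\<Sum>k\<in>{n..K}. (cmod (R_op \<alpha> (u (r i)) k))\<^sup>2)"
    unfolding sum_distrib_left by (intro sum.cong refl) (simp add: Ru n_def mult.commute)
  also have "\<dots> \<le> (\<Sum>k\<in>{n..K}. 2 * (cmod (Dv k))\<^sup>2 + 2 * (cmod (g k))\<^sup>2)"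
  proof (rule sum_mono)
    fix k
    have "R_op \<alpha> (u (r i)) k = Dv k - (- g k)" unfolding Dv_def by simp
    hence "(cmod (R_op \<alpha> (u (r i)) k))\<^sup>2 \<le> 2 * (cmod (Dv k))\<^sup>2 + 2 * (cmod (- g k))\<^sup>2"
      using sq_diff_le by metis
    thus "(cmod (R_op \<alpha> (u (r i)) k))\<^sup>2 \<le> 2 * (cmod (Dv k))\<^sup>2 + 2 * (cmod (g k))\<^sup>2" by simp
  qed
  also have "\<dots> = 2 * (\<Sum>k\<in>{n..K}. (cmod (Dv k))\<^sup>2) + 2 * (\<Sum>k\<in>{n..<Suc K}. (cmod (g k))\<^sup>2)"
    by (simp add: sum.distrib sum_distrib_left atLeastLessThanSuc_atLeastAtMost)
  also have "\<dots> \<le> 2 * (l2_norm Dv)\<^sup>2 + 2 * (\<delta> / 8)"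
  proof (intro add_mono mult_left_mono)
    show "(\<Sum>k\<in>{n..K}. (cmod (Dv k))\<^sup>2) \<le> (l2_norm Dv)\<^sup>2" by (rule l2_partial[OF Dl2]) simp
    have "norm (\<Sum>k\<in>{n..<Suc K}. (cmod (g k))\<^sup>2) < \<delta> / 8" by (rule M[OF nM])
    thus "(\<Sum>k\<in>{n..<Suc K}. (cmod (g k))\<^sup>2) \<le> \<delta> / 8" by simp
  qed auto
  also have "\<dots> < \<delta>" using Dsmall d by linarith
  finally have "\<delta> < \<delta>" .
  thus False by simp
qed


theorem theorem4p6:
  fixes \<alpha> :: "nat \<Rightarrow> complex"
  assumes "in_l2 \<alpha>"
  shows "(compact_op_l2 (R_op \<alpha>) \<longleftrightarrow> (Ltail \<alpha> \<longlonglongrightarrow> 0))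
       \<and> ((Ltail \<alpha> \<longlonglongrightarrow> 0) \<longleftrightarrow> (\<forall>\<epsilon>>0. finite_length \<alpha> \<epsilon>))"
proof -
  have l2: "in_l2 \<alpha>" by (rule assms)
  have ch: "compact_op_l2 (R_op \<alpha>) \<longleftrightarrow> hcond \<alpha>"
    using compact_hcond hcond_compact[OF l2] by blast
  have lh: "(Ltail \<alpha> \<longlonglongrightarrow> 0) \<longleftrightarrow> hcond \<alpha>"
  proof
    assume L: "Ltail \<alpha> \<longlonglongrightarrow> 0"
    show "hcond \<alpha>" by (rule LI_hcond[OF l2 Ltail_small[OF L]])
  next
    assume h: "hcond \<alpha>"
    show "Ltail \<alpha> \<longlonglongrightarrow> 0" by (rule small_Ltail[OF hcond_LI[OF h]])
  qed
  have fh: "(\<forall>\<epsilon>>0. finite_length \<alpha> \<epsilon>) \<longleftrightarrow> hcond \<alpha>"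
  proof
    assume F: "\<forall>\<epsilon>>0. finite_length \<alpha> \<epsilon>"
    show "hcond \<alpha>" by (rule LI_hcond[OF l2 finite_length_small]) (use F in blast)
  next
    assume h: "hcond \<alpha>"
    show "\<forall>\<epsilon>>0. finite_length \<alpha> \<epsilon>"
      using small_finite_length hcond_LI[OF h] by blast
  qed
  show ?thesis using ch lh fh by blast
qed

end
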